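(* If $\mathcal F=(A,X,f)$ and $\mathcal G=(B,X,g)$ are complete D3-directable fuzzy automata, then their direct product $\mathcal F\times\mathcal G$ is D3-directable.
   Context: A fuzzy automaton is a triple $\mathcal F=(A,X,f)$ with $A$ a finite nonempty set of states, $X$ a finite nonempty alphabet, and $f:A\times X\times A\to[0,1]$, extended to words by $f^*(a,\varepsilon,a)=1$, $f^*(a,\varepsilon,b)=0$ ($b\neq a$), $f^*(a,vx,b)=\max_{c\in A}\min\{f^*(a,v,c),f(c,x,b)\}$. Let $\mathcal F(a,w)=\{b\in A\mid f^*(a,w,b)>0\}$. $\mathcal F$ is complete if $\mathcal F(a,x)\neq\emptyset$ for all $a\in A$, $x\in X$. $\mathcal F$ is D3-directable if there are $w\in X^*$ and $c\in A$ with $c\in\mathcal F(a,w)$ for all $a\in A$. The direct product is $\mathcal F\times\mathcal G=(A\times B,X,h)$ with $h((a,b),x,(a',b'))=\min\{f(a,x,a'),g(b,x,b')\}$. *)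

theory Defs
  imports Complex_Main
begin

definition fuzzy_automaton :: "'a set \<Rightarrow> 'x set \<Rightarrow> ('a \<Rightarrow> 'x \<Rightarrow> 'a \<Rightarrow> real) \<Rightarrow> bool" where
  "fuzzy_automaton A X f \<longleftrightarrow> finite A \<and> A \<noteq> {} \<and> finite X \<and> X \<noteq> {} \<and>
     (\<forall>a\<in>A. \<forall>x\<in>X. \<forall>b\<in>A. 0 \<le> f a x b \<and> f a x b \<le> 1)"

text \<open>Auxiliary: extension evaluated on the reversed word, so that the last letter
  is the head of the list.\<close>

fun fstar_rev :: "'a set \<Rightarrow> ('a \<Rightarrow> 'x \<Rightarrow> 'a \<Rightarrow> real) \<Rightarrow> 'a \<Rightarrow> 'x list \<Rightarrow> 'a \<Rightarrow> real" where
  "fstar_rev A f a [] b = (if b = a then 1 else 0)"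
| "fstar_rev A f a (x # rv) b = Max ((\<lambda>c. min (fstar_rev A f a rv c) (f c x b)) ` A)"

definition fstar :: "'a set \<Rightarrow> ('a \<Rightarrow> 'x \<Rightarrow> 'a \<Rightarrow> real) \<Rightarrow> 'a \<Rightarrow> 'x list \<Rightarrow> 'a \<Rightarrow> real" where
  "fstar A f a w b = fstar_rev A f a (rev w) b"

definition reach :: "'a set \<Rightarrow> ('a \<Rightarrow> 'x \<Rightarrow> 'a \<Rightarrow> real) \<Rightarrow> 'a \<Rightarrow> 'x list \<Rightarrow> 'a set" where
  "reach A f a w = {b \<in> A. fstar A f a w b > 0}"

definition complete_fa :: "'a set \<Rightarrow> 'x set \<Rightarrow> ('a \<Rightarrow> 'x \<Rightarrow> 'a \<Rightarrow> real) \<Rightarrow> bool" where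
  "complete_fa A X f \<longleftrightarrow> (\<forall>a\<in>A. \<forall>x\<in>X. reach A f a [x] \<noteq> {})"

definition D3_directable :: "'a set \<Rightarrow> 'x set \<Rightarrow> ('a \<Rightarrow> 'x \<Rightarrow> 'a \<Rightarrow> real) \<Rightarrow> bool" where
  "D3_directable A X f \<longleftrightarrow> (\<exists>w\<in>lists X. \<exists>c\<in>A. \<forall>a\<in>A. c \<in> reach A f a w)"

definition prod_trans :: "('a \<Rightarrow> 'x \<Rightarrow> 'a \<Rightarrow> real) \<Rightarrow> ('b \<Rightarrow> 'x \<Rightarrow> 'b \<Rightarrow> real)
    \<Rightarrow> ('a \<times> 'b) \<Rightarrow> 'x \<Rightarrow> ('a \<times> 'b) \<Rightarrow> real" where
  "prod_trans f g p x q = min (f (fst p) x (fst q)) (g (snd p) x (snd q))"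

end

theory Submission
  imports Defs
begin

lemma fr_cons_pos:
  assumes "finite A" "A \<noteq> {}"
  shows "fstar_rev A f a (x # rv) b > 0 \<longleftrightarrow> (\<exists>c\<in>A. fstar_rev A f a rv c > 0 \<and> f c x b > 0)"
  using assms by (simp add: Max_gr_iff)

lemma fr_comp:
  assumes "finite A" "A \<noteq> {}"
  shows "fstar_rev A f m rv b > 0 \<Longrightarrow> fstar_rev A f a ru m > 0 \<Longrightarrow> fstar_rev A f a (rv @ ru) b > 0"
proof (induction rv arbitrary: b)
  case Nil
  then have "b = m" by (simp split: if_splits)
  then show ?case using Nil.prems(2) by simp
next
  case (Cons x rv)
  from Cons.prems(1) obtain c where c: "c \<in> A" "fstar_rev A f m rv c > 0" "f c x b > 0"
    unfolding fr_cons_pos[OF assms] by blast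
  have "fstar_rev A f a (rv @ ru) c > 0" by (rule Cons.IH[OF c(2) Cons.prems(2)])
  then have "\<exists>c\<in>A. fstar_rev A f a (rv @ ru) c > 0 \<and> f c x b > 0" using c by blast
  then show ?case unfolding append_Cons fr_cons_pos[OF assms] .
qed

lemma reach_comp:
  assumes "finite A" "A \<noteq> {}" "m \<in> reach A f a u" "b \<in> reach A f m v"
  shows "b \<in> reach A f a (u @ v)"
  using assms(3,4) fr_comp[OF assms(1,2), of f m "rev v" b a "rev u"] by (simp add: reach_def fstar_def)

lemma reach_nonempty:
  assumes "finite A" "A \<noteq> {}" "complete_fa A X f"
  shows "a \<in> A \<Longrightarrow> w \<in> lists X \<Longrightarrow> reach A f a w \<noteq> {}"
proof (induction w rule: rev_induct)
  case Nil
  then show ?case by (auto simp: reach_def fstar_def)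
next
  case (snoc x w)
  then obtain m where m: "m \<in> reach A f a w" by auto
  then have "m \<in> A" by (simp add: reach_def)
  have "reach A f m [x] \<noteq> {}" using snoc.prems assms(3) \<open>m \<in> A\<close> unfolding complete_fa_def by auto
  then obtain b where "b \<in> reach A f m [x]" by blast
  with reach_comp[OF assms(1,2) m] show ?case by blast
qed

lemma fr_prod:
  assumes "finite A" "A \<noteq> {}" "finite B" "B \<noteq> {}"
  shows "fstar_rev A f a rv a' > 0 \<Longrightarrow> fstar_rev B g b rv b' > 0 \<Longrightarrow>
     fstar_rev (A \<times> B) (prod_trans f g) (a, b) rv (a', b') > 0"
proof (induction rv arbitrary: a' b')
  case Nil
  from Nil.prems have "a' = a" "b' = b" by (simp_all split: if_splits)
  then show ?case by simp
next
  case (Cons x rv)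
  obtain c where c: "c \<in> A" "fstar_rev A f a rv c > 0" "f c x a' > 0"
    using Cons.prems(1) unfolding fr_cons_pos[OF assms(1,2)] by blast
  obtain d where d: "d \<in> B" "fstar_rev B g b rv d > 0" "g d x b' > 0"
    using Cons.prems(2) unfolding fr_cons_pos[OF assms(3,4)] by blast
  have "fstar_rev (A \<times> B) (prod_trans f g) (a, b) rv (c, d) > 0"
    by (rule Cons.IH[OF c(2) d(2)])
  moreover have "prod_trans f g (c, d) x (a', b') > 0"
    using c d by (simp add: prod_trans_def)
  moreover have "finite (A \<times> B)" "A \<times> B \<noteq> {}" using assms by auto
  ultimately show ?case using c d unfolding fr_cons_pos[OF \<open>finite (A \<times> B)\<close> \<open>A \<times> B \<noteq> {}\<close>]
    by blast
qed

theorem proposition6p10: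
  fixes A :: "'a set" and B :: "'b set" and X :: "'x set"
    and f :: "'a \<Rightarrow> 'x \<Rightarrow> 'a \<Rightarrow> real" and g :: "'b \<Rightarrow> 'x \<Rightarrow> 'b \<Rightarrow> real"
  assumes "fuzzy_automaton A X f" and "fuzzy_automaton B X g"
    and "complete_fa A X f" and "complete_fa B X g"
    and "D3_directable A X f" and "D3_directable B X g"
  shows "D3_directable (A \<times> B) X (prod_trans f g)"
proof -
  have fA: "finite A" "A \<noteq> {}" and fB: "finite B" "B \<noteq> {}"
    using assms(1,2) by (auto simp: fuzzy_automaton_def)
  obtain u c where u: "u \<in> lists X" and c: "c \<in> A" and uc: "\<forall>a\<in>A. c \<in> reach A f a u"
    using assms(5) by (auto simp: D3_directable_def)
  obtain v d where v: "v \<in> lists X" and d: "d \<in> B" and vd: "\<forall>b\<in>B. d \<in> reach B g b v"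
    using assms(6) by (auto simp: D3_directable_def)
  obtain c' where c': "c' \<in> reach A f c v"
    using reach_nonempty[OF fA assms(3) c v] by auto
  have c'A: "c' \<in> A" using c' by (simp add: reach_def)
  show ?thesis unfolding D3_directable_def
  proof (intro bexI[of _ "u @ v"] bexI[of _ "(c', d)"] ballI)
    fix p assume p: "p \<in> A \<times> B"
    obtain a b where ab: "p = (a, b)" "a \<in> A" "b \<in> B" using p by auto
    have ha: "c' \<in> reach A f a (u @ v)"
      by (rule reach_comp[OF fA uc[rule_format, OF ab(2)] c'])
    obtain b' where b': "b' \<in> reach B g b u"
      using reach_nonempty[OF fB assms(4) ab(3) u] by auto
    then have "b' \<in> B" by (simp add: reach_def)
    have hb: "d \<in> reach B g b (u @ v)"
      by (rule reach_comp[OF fB b' vd[rule_format, OF \<open>b' \<in> B\<close>]])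
    have "fstar_rev A f a (rev (u @ v)) c' > 0" "fstar_rev B g b (rev (u @ v)) d > 0"
      using ha hb by (simp_all add: reach_def fstar_def del: rev_append)
    from fr_prod[OF fA fB this]
    show "(c', d) \<in> reach (A \<times> B) (prod_trans f g) p (u @ v)"
      using ab(1) c'A d by (simp add: reach_def fstar_def del: rev_append)
  next
    show "(c', d) \<in> A \<times> B" using c'A d by simp
    show "u @ v \<in> lists X" using u v by simp
  qed
qed

end
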